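(* There exists $\alpha\in(0,1)$ such that $\tilde\zeta(\upsilon)<\alpha<1$ for all $\upsilon\in(0,1)$, where $\tilde\zeta(\upsilon):=\sup_{j\ge1}\zeta_1(\upsilon^j)$.
   Context: The function $\zeta_1$ on $(0,1)$ is $\zeta_1(\upsilon)=\frac{1}{8\log^3\upsilon}\big(9-12\upsilon^2+3\upsilon^4+4\log\upsilon(3+\log^2\upsilon)+\sqrt{R(\upsilon)}\big)$, with $R(\upsilon)=225-504\upsilon^2+342\upsilon^4-72\upsilon^6+9\upsilon^8+(360-288\upsilon^2-72\upsilon^4)\log\upsilon+144\log^2\upsilon+(-120+96\upsilon^2+24\upsilon^4)\log^3\upsilon-96\log^4\upsilon+16\log^6\upsilon$. *)

theory Defs
  imports "HOL-Analysis.Analysis"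
begin

definition R_fun :: "real \<Rightarrow> real" where
  "R_fun u = 225 - 504*u^2 + 342*u^4 - 72*u^6 + 9*u^8
     + (360 - 288*u^2 - 72*u^4) * ln u + 144 * (ln u)^2
     + (-120 + 96*u^2 + 24*u^4) * (ln u)^3 - 96 * (ln u)^4 + 16 * (ln u)^6"

definition zeta1 :: "real \<Rightarrow> real" where
  "zeta1 u = (1 / (8 * (ln u)^3)) *
     (9 - 12*u^2 + 3*u^4 + 4 * ln u * (3 + (ln u)^2) + sqrt (R_fun u))"

definition zeta_tilde :: "real \<Rightarrow> real" where
  "zeta_tilde u = (SUP j\<in>{1::nat..}. zeta1 (u ^ j))"

end

theory Submission
  imports Defs
begin

lemma nonneg_deriv:
  fixes F F' :: "real \<Rightarrow> real"
  assumes d: "\<And>t. 0 \<le> t \<Longrightarrow> (F has_real_derivative F' t) (at t)"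
    and p: "\<And>t. 0 \<le> t \<Longrightarrow> 0 \<le> F' t" and z: "0 \<le> F 0" and t: "0 \<le> t"
  shows "0 \<le> F t"
proof -
  have "F 0 \<le> F t"
    by (rule DERIV_nonneg_imp_nondecreasing[OF t]) (use d p in auto)
  with z show ?thesis by simp
qed

lemma m4: "0 \<le> (t::real) \<Longrightarrow> 0 \<le> ((544456704) + (1714028544)*t + (1878982656)*t^2 + (931135488)*t^3 + (223870976)*t^4 + (25165824)*t^5 + (1048576)*t^6)*exp(2*t)"
  by (intro mult_nonneg_nonneg add_nonneg_nonneg) auto

lemma dm3: "((\<lambda>t::real. ((90906624) + (362643456)*t + (494370816)*t^2 + (296747008)*t^3 + (84410368)*t^4 + (11010048)*t^5 + (524288)*t^6)*exp(2*t) + ((-6144))) has_real_derivative (((544456704) + (1714028544)*t + (1878982656)*t^2 + (931135488)*t^3 + (223870976)*t^4 + (25165824)*t^5 + (1048576)*t^6)*exp(2*t))) (at t)"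
  by (auto intro!: derivative_eq_intros simp: algebra_simps)

lemma m3: "0 \<le> (t::real) \<Longrightarrow> 0 \<le> ((90906624) + (362643456)*t + (494370816)*t^2 + (296747008)*t^3 + (84410368)*t^4 + (11010048)*t^5 + (524288)*t^6)*exp(2*t) + ((-6144))"
  by (rule nonneg_deriv[where F="\<lambda>t. ((90906624) + (362643456)*t + (494370816)*t^2 + (296747008)*t^3 + (84410368)*t^4 + (11010048)*t^5 + (524288)*t^6)*exp(2*t) + ((-6144))" and F'="\<lambda>t. ((544456704) + (1714028544)*t + (1878982656)*t^2 + (931135488)*t^3 + (223870976)*t^4 + (25165824)*t^5 + (1048576)*t^6)*exp(2*t)"]) (use dm3 m4 in auto)

lemma dm2: "((\<lambda>t::real. ((12718080) + (65470464)*t + (115851264)*t^2 + (87556096)*t^3 + (30408704)*t^4 + (4718592)*t^5 + (262144)*t^6)*exp(2*t) + ((-24576) + (-6144)*t)) has_real_derivative (((90906624) + (362643456)*t + (494370816)*t^2 + (296747008)*t^3 + (84410368)*t^4 + (11010048)*t^5 + (524288)*t^6)*exp(2*t) + ((-6144)))) (at t)"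
  by (auto intro!: derivative_eq_intros simp: algebra_simps)

lemma m2: "0 \<le> (t::real) \<Longrightarrow> 0 \<le> ((12718080) + (65470464)*t + (115851264)*t^2 + (87556096)*t^3 + (30408704)*t^4 + (4718592)*t^5 + (262144)*t^6)*exp(2*t) + ((-24576) + (-6144)*t)"
  by (rule nonneg_deriv[where F="\<lambda>t. ((12718080) + (65470464)*t + (115851264)*t^2 + (87556096)*t^3 + (30408704)*t^4 + (4718592)*t^5 + (262144)*t^6)*exp(2*t) + ((-24576) + (-6144)*t)" and F'="\<lambda>t. ((90906624) + (362643456)*t + (494370816)*t^2 + (296747008)*t^3 + (84410368)*t^4 + (11010048)*t^5 + (524288)*t^6)*exp(2*t) + ((-6144))"]) (use dm2 m3 in auto)

lemma dm1: "((\<lambda>t::real. ((1554432) + (9609216)*t + (23126016)*t^2 + (23199744)*t^3 + (10289152)*t^4 + (1966080)*t^5 + (131072)*t^6)*exp(2*t) + ((-43008) + (-24576)*t + (-3072)*t^2)) has_real_derivative (((12718080) + (65470464)*t + (115851264)*t^2 + (87556096)*t^3 + (30408704)*t^4 + (4718592)*t^5 + (262144)*t^6)*exp(2*t) + ((-24576) + (-6144)*t))) (at t)"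
  by (auto intro!: derivative_eq_intros simp: algebra_simps)

lemma m1: "0 \<le> (t::real) \<Longrightarrow> 0 \<le> ((1554432) + (9609216)*t + (23126016)*t^2 + (23199744)*t^3 + (10289152)*t^4 + (1966080)*t^5 + (131072)*t^6)*exp(2*t) + ((-43008) + (-24576)*t + (-3072)*t^2)"
  by (rule nonneg_deriv[where F="\<lambda>t. ((1554432) + (9609216)*t + (23126016)*t^2 + (23199744)*t^3 + (10289152)*t^4 + (1966080)*t^5 + (131072)*t^6)*exp(2*t) + ((-43008) + (-24576)*t + (-3072)*t^2)" and F'="\<lambda>t. ((12718080) + (65470464)*t + (115851264)*t^2 + (87556096)*t^3 + (30408704)*t^4 + (4718592)*t^5 + (262144)*t^6)*exp(2*t) + ((-24576) + (-6144)*t)"]) (use dm1 m2 in auto)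

lemma dm0: "((\<lambda>t::real. ((224256) + (1105920)*t + (3698688)*t^2 + (5242880)*t^3 + (3178496)*t^4 + (786432)*t^5 + (65536)*t^6)*exp(2*t) + ((-49152) + (-43008)*t + (-12288)*t^2 + (-1024)*t^3)) has_real_derivative (((1554432) + (9609216)*t + (23126016)*t^2 + (23199744)*t^3 + (10289152)*t^4 + (1966080)*t^5 + (131072)*t^6)*exp(2*t) + ((-43008) + (-24576)*t + (-3072)*t^2))) (at t)"
  by (auto intro!: derivative_eq_intros simp: algebra_simps)

lemma m0: "0 \<le> (t::real) \<Longrightarrow> 0 \<le> ((224256) + (1105920)*t + (3698688)*t^2 + (5242880)*t^3 + (3178496)*t^4 + (786432)*t^5 + (65536)*t^6)*exp(2*t) + ((-49152) + (-43008)*t + (-12288)*t^2 + (-1024)*t^3)"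
  by (rule nonneg_deriv[where F="\<lambda>t. ((224256) + (1105920)*t + (3698688)*t^2 + (5242880)*t^3 + (3178496)*t^4 + (786432)*t^5 + (65536)*t^6)*exp(2*t) + ((-49152) + (-43008)*t + (-12288)*t^2 + (-1024)*t^3)" and F'="\<lambda>t. ((1554432) + (9609216)*t + (23126016)*t^2 + (23199744)*t^3 + (10289152)*t^4 + (1966080)*t^5 + (131072)*t^6)*exp(2*t) + ((-43008) + (-24576)*t + (-3072)*t^2)"]) (use dm0 m1 in auto)

lemma h8: "0 \<le> (t::real) \<Longrightarrow> 0 \<le> ((224256) + (1105920)*t + (3698688)*t^2 + (5242880)*t^3 + (3178496)*t^4 + (786432)*t^5 + (65536)*t^6)*exp(4*t) + ((-49152) + (-43008)*t + (-12288)*t^2 + (-1024)*t^3)*exp(2*t)"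
proof -
  assume "0 \<le> t"
  then have "0 \<le> exp(2*t) * (((224256) + (1105920)*t + (3698688)*t^2 + (5242880)*t^3 + (3178496)*t^4 + (786432)*t^5 + (65536)*t^6)*exp(2*t) + ((-49152) + (-43008)*t + (-12288)*t^2 + (-1024)*t^3))" using m0 by simp
  moreover have e: "exp(4*t) = exp(2*t)*exp(2*t)" by (simp flip: exp_add)
  ultimately show ?thesis unfolding e by (simp add: algebra_simps)
qed

lemma dh7: "((\<lambda>t::real. ((33984) + (88320)*t + (376320)*t^2 + (731136)*t^3 + (579584)*t^4 + (172032)*t^5 + (16384)*t^6)*exp(4*t) + ((-16512) + (-16128)*t + (-5376)*t^2 + (-512)*t^3)*exp(2*t)) has_real_derivative (((224256) + (1105920)*t + (3698688)*t^2 + (5242880)*t^3 + (3178496)*t^4 + (786432)*t^5 + (65536)*t^6)*exp(4*t) + ((-49152) + (-43008)*t + (-12288)*t^2 + (-1024)*t^3)*exp(2*t))) (at t)"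
  by (auto intro!: derivative_eq_intros simp: algebra_simps)

lemma h7: "0 \<le> (t::real) \<Longrightarrow> 0 \<le> ((33984) + (88320)*t + (376320)*t^2 + (731136)*t^3 + (579584)*t^4 + (172032)*t^5 + (16384)*t^6)*exp(4*t) + ((-16512) + (-16128)*t + (-5376)*t^2 + (-512)*t^3)*exp(2*t)"
  by (rule nonneg_deriv[where F="\<lambda>t. ((33984) + (88320)*t + (376320)*t^2 + (731136)*t^3 + (579584)*t^4 + (172032)*t^5 + (16384)*t^6)*exp(4*t) + ((-16512) + (-16128)*t + (-5376)*t^2 + (-512)*t^3)*exp(2*t)" and F'="\<lambda>t. ((224256) + (1105920)*t + (3698688)*t^2 + (5242880)*t^3 + (3178496)*t^4 + (786432)*t^5 + (65536)*t^6)*exp(4*t) + ((-49152) + (-43008)*t + (-12288)*t^2 + (-1024)*t^3)*exp(2*t)"]) (use dh7 h8 in auto)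

lemma dh6: "((\<lambda>t::real. ((6864) + (6528)*t + (31104)*t^2 + (83968)*t^3 + (98816)*t^4 + (36864)*t^5 + (4096)*t^6)*exp(4*t) + ((-5376) + (-5760)*t + (-2304)*t^2 + (-256)*t^3)*exp(2*t)) has_real_derivative (((33984) + (88320)*t + (376320)*t^2 + (731136)*t^3 + (579584)*t^4 + (172032)*t^5 + (16384)*t^6)*exp(4*t) + ((-16512) + (-16128)*t + (-5376)*t^2 + (-512)*t^3)*exp(2*t))) (at t)"
  by (auto intro!: derivative_eq_intros simp: algebra_simps)

lemma h6: "0 \<le> (t::real) \<Longrightarrow> 0 \<le> ((6864) + (6528)*t + (31104)*t^2 + (83968)*t^3 + (98816)*t^4 + (36864)*t^5 + (4096)*t^6)*exp(4*t) + ((-5376) + (-5760)*t + (-2304)*t^2 + (-256)*t^3)*exp(2*t)"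
  by (rule nonneg_deriv[where F="\<lambda>t. ((6864) + (6528)*t + (31104)*t^2 + (83968)*t^3 + (98816)*t^4 + (36864)*t^5 + (4096)*t^6)*exp(4*t) + ((-5376) + (-5760)*t + (-2304)*t^2 + (-256)*t^3)*exp(2*t)" and F'="\<lambda>t. ((33984) + (88320)*t + (376320)*t^2 + (731136)*t^3 + (579584)*t^4 + (172032)*t^5 + (16384)*t^6)*exp(4*t) + ((-16512) + (-16128)*t + (-5376)*t^2 + (-512)*t^3)*exp(2*t)"]) (use dh6 h7 in auto)

lemma dh5: "((\<lambda>t::real. ((1728) + (-48)*t + (3360)*t^2 + (5888)*t^3 + (15104)*t^4 + (7680)*t^5 + (1024)*t^6)*exp(4*t) + ((-1728) + (-1920)*t + (-960)*t^2 + (-128)*t^3)*exp(2*t)) has_real_derivative (((6864) + (6528)*t + (31104)*t^2 + (83968)*t^3 + (98816)*t^4 + (36864)*t^5 + (4096)*t^6)*exp(4*t) + ((-5376) + (-5760)*t + (-2304)*t^2 + (-256)*t^3)*exp(2*t))) (at t)"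
  by (auto intro!: derivative_eq_intros simp: algebra_simps)

lemma h5: "0 \<le> (t::real) \<Longrightarrow> 0 \<le> ((1728) + (-48)*t + (3360)*t^2 + (5888)*t^3 + (15104)*t^4 + (7680)*t^5 + (1024)*t^6)*exp(4*t) + ((-1728) + (-1920)*t + (-960)*t^2 + (-128)*t^3)*exp(2*t)"
  by (rule nonneg_deriv[where F="\<lambda>t. ((1728) + (-48)*t + (3360)*t^2 + (5888)*t^3 + (15104)*t^4 + (7680)*t^5 + (1024)*t^6)*exp(4*t) + ((-1728) + (-1920)*t + (-960)*t^2 + (-128)*t^3)*exp(2*t)" and F'="\<lambda>t. ((6864) + (6528)*t + (31104)*t^2 + (83968)*t^3 + (98816)*t^4 + (36864)*t^5 + (4096)*t^6)*exp(4*t) + ((-5376) + (-5760)*t + (-2304)*t^2 + (-256)*t^3)*exp(2*t)"]) (use dh5 h6 in auto)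

lemma dh4: "((\<lambda>t::real. ((576) + (-576)*t + (1128)*t^2 + (-384)*t^3 + (1856)*t^4 + (1536)*t^5 + (256)*t^6)*exp(4*t) + ((-576) + (-576)*t + (-384)*t^2 + (-64)*t^3)*exp(2*t)) has_real_derivative (((1728) + (-48)*t + (3360)*t^2 + (5888)*t^3 + (15104)*t^4 + (7680)*t^5 + (1024)*t^6)*exp(4*t) + ((-1728) + (-1920)*t + (-960)*t^2 + (-128)*t^3)*exp(2*t))) (at t)"
  by (auto intro!: derivative_eq_intros simp: algebra_simps)

lemma h4: "0 \<le> (t::real) \<Longrightarrow> 0 \<le> ((576) + (-576)*t + (1128)*t^2 + (-384)*t^3 + (1856)*t^4 + (1536)*t^5 + (256)*t^6)*exp(4*t) + ((-576) + (-576)*t + (-384)*t^2 + (-64)*t^3)*exp(2*t)"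
  by (rule nonneg_deriv[where F="\<lambda>t. ((576) + (-576)*t + (1128)*t^2 + (-384)*t^3 + (1856)*t^4 + (1536)*t^5 + (256)*t^6)*exp(4*t) + ((-576) + (-576)*t + (-384)*t^2 + (-64)*t^3)*exp(2*t)" and F'="\<lambda>t. ((1728) + (-48)*t + (3360)*t^2 + (5888)*t^3 + (15104)*t^4 + (7680)*t^5 + (1024)*t^6)*exp(4*t) + ((-1728) + (-1920)*t + (-960)*t^2 + (-128)*t^3)*exp(2*t)"]) (use dh4 h5 in auto)

lemma dh3: "((\<lambda>t::real. ((234) + (-360)*t + (432)*t^2 + (-200)*t^3 + (104)*t^4 + (288)*t^5 + (64)*t^6)*exp(4*t) + ((-216) + (-144)*t + (-144)*t^2 + (-32)*t^3)*exp(2*t) + ((-18))) has_real_derivative (((576) + (-576)*t + (1128)*t^2 + (-384)*t^3 + (1856)*t^4 + (1536)*t^5 + (256)*t^6)*exp(4*t) + ((-576) + (-576)*t + (-384)*t^2 + (-64)*t^3)*exp(2*t))) (at t)"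
  by (auto intro!: derivative_eq_intros simp: algebra_simps)

lemma h3: "0 \<le> (t::real) \<Longrightarrow> 0 \<le> ((234) + (-360)*t + (432)*t^2 + (-200)*t^3 + (104)*t^4 + (288)*t^5 + (64)*t^6)*exp(4*t) + ((-216) + (-144)*t + (-144)*t^2 + (-32)*t^3)*exp(2*t) + ((-18))"
  by (rule nonneg_deriv[where F="\<lambda>t. ((234) + (-360)*t + (432)*t^2 + (-200)*t^3 + (104)*t^4 + (288)*t^5 + (64)*t^6)*exp(4*t) + ((-216) + (-144)*t + (-144)*t^2 + (-32)*t^3)*exp(2*t) + ((-18))" and F'="\<lambda>t. ((576) + (-576)*t + (1128)*t^2 + (-384)*t^3 + (1856)*t^4 + (1536)*t^5 + (256)*t^6)*exp(4*t) + ((-576) + (-576)*t + (-384)*t^2 + (-64)*t^3)*exp(2*t)"]) (use dh3 h4 in auto)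

lemma dh2: "((\<lambda>t::real. ((96) + (-150)*t + (120)*t^2 + (-16)*t^3 + (-34)*t^4 + (48)*t^5 + (16)*t^6)*exp(4*t) + ((-96) + (-24)*t + (-48)*t^2 + (-16)*t^3)*exp(2*t) + ((-18)*t)) has_real_derivative (((234) + (-360)*t + (432)*t^2 + (-200)*t^3 + (104)*t^4 + (288)*t^5 + (64)*t^6)*exp(4*t) + ((-216) + (-144)*t + (-144)*t^2 + (-32)*t^3)*exp(2*t) + ((-18)))) (at t)"
  by (auto intro!: derivative_eq_intros simp: algebra_simps)

lemma h2: "0 \<le> (t::real) \<Longrightarrow> 0 \<le> ((96) + (-150)*t + (120)*t^2 + (-16)*t^3 + (-34)*t^4 + (48)*t^5 + (16)*t^6)*exp(4*t) + ((-96) + (-24)*t + (-48)*t^2 + (-16)*t^3)*exp(2*t) + ((-18)*t)"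
  by (rule nonneg_deriv[where F="\<lambda>t. ((96) + (-150)*t + (120)*t^2 + (-16)*t^3 + (-34)*t^4 + (48)*t^5 + (16)*t^6)*exp(4*t) + ((-96) + (-24)*t + (-48)*t^2 + (-16)*t^3)*exp(2*t) + ((-18)*t)" and F'="\<lambda>t. ((234) + (-360)*t + (432)*t^2 + (-200)*t^3 + (104)*t^4 + (288)*t^5 + (64)*t^6)*exp(4*t) + ((-216) + (-144)*t + (-144)*t^2 + (-32)*t^3)*exp(2*t) + ((-18))"]) (use dh2 h3 in auto)

lemma dh1: "((\<lambda>t::real. ((36) + (-48)*t + (21)*t^2 + (12)*t^3 + (-16)*t^4 + (6)*t^5 + (4)*t^6)*exp(4*t) + ((-48) + (-12)*t^2 + (-8)*t^3)*exp(2*t) + ((12) + (-9)*t^2)) has_real_derivative (((96) + (-150)*t + (120)*t^2 + (-16)*t^3 + (-34)*t^4 + (48)*t^5 + (16)*t^6)*exp(4*t) + ((-96) + (-24)*t + (-48)*t^2 + (-16)*t^3)*exp(2*t) + ((-18)*t))) (at t)"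
  by (auto intro!: derivative_eq_intros simp: algebra_simps)

lemma h1: "0 \<le> (t::real) \<Longrightarrow> 0 \<le> ((36) + (-48)*t + (21)*t^2 + (12)*t^3 + (-16)*t^4 + (6)*t^5 + (4)*t^6)*exp(4*t) + ((-48) + (-12)*t^2 + (-8)*t^3)*exp(2*t) + ((12) + (-9)*t^2)"
  by (rule nonneg_deriv[where F="\<lambda>t. ((36) + (-48)*t + (21)*t^2 + (12)*t^3 + (-16)*t^4 + (6)*t^5 + (4)*t^6)*exp(4*t) + ((-48) + (-12)*t^2 + (-8)*t^3)*exp(2*t) + ((12) + (-9)*t^2)" and F'="\<lambda>t. ((96) + (-150)*t + (120)*t^2 + (-16)*t^3 + (-34)*t^4 + (48)*t^5 + (16)*t^6)*exp(4*t) + ((-96) + (-24)*t + (-48)*t^2 + (-16)*t^3)*exp(2*t) + ((-18)*t)"]) (use dh1 h2 in auto)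

lemma dh0: "((\<lambda>t::real. ((12) + (-12)*t + (7)*t^3 + (-4)*t^4 + (1)*t^6)*exp(4*t) + ((-24) + (-4)*t^3)*exp(2*t) + ((12) + (12)*t + (-3)*t^3)) has_real_derivative (((36) + (-48)*t + (21)*t^2 + (12)*t^3 + (-16)*t^4 + (6)*t^5 + (4)*t^6)*exp(4*t) + ((-48) + (-12)*t^2 + (-8)*t^3)*exp(2*t) + ((12) + (-9)*t^2))) (at t)"
  by (auto intro!: derivative_eq_intros simp: algebra_simps)

lemma h0: "0 \<le> (t::real) \<Longrightarrow> 0 \<le> ((12) + (-12)*t + (7)*t^3 + (-4)*t^4 + (1)*t^6)*exp(4*t) + ((-24) + (-4)*t^3)*exp(2*t) + ((12) + (12)*t + (-3)*t^3)"
  by (rule nonneg_deriv[where F="\<lambda>t. ((12) + (-12)*t + (7)*t^3 + (-4)*t^4 + (1)*t^6)*exp(4*t) + ((-24) + (-4)*t^3)*exp(2*t) + ((12) + (12)*t + (-3)*t^3)" and F'="\<lambda>t. ((36) + (-48)*t + (21)*t^2 + (12)*t^3 + (-16)*t^4 + (6)*t^5 + (4)*t^6)*exp(4*t) + ((-48) + (-12)*t^2 + (-8)*t^3)*exp(2*t) + ((12) + (-9)*t^2)"]) (use dh0 h1 in auto)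


lemma zeta1_le:
  fixes u :: real
  assumes u0: "0 < u" and u1: "u < 1"
  shows "zeta1 u \<le> 3/4"
proof -
  define L where "L = ln u"
  have L0: "L < 0" using u0 u1 by (simp add: L_def)
  have t0: "0 \<le> -L" using L0 by simp
  note hh = h0[OF t0]
  have e1: "exp (-L) = 1/u" using u0 by (simp add: L_def exp_minus inverse_eq_divide)
  have e2: "exp (2*(-L)) = 1/u^2"
  proof -
    have "exp (2*(-L)) = exp (-L + -L)" by simp
    also have "\<dots> = 1/u^2" by (simp only: exp_add e1) (simp add: power2_eq_square)
    finally show ?thesis .
  qed
  have e4: "exp (4*(-L)) = 1/u^4"
  proof -
    have "exp (4*(-L)) = exp (2*(-L) + 2*(-L))" by simp
    also have "\<dots> = 1/u^4" by (simp only: exp_add e2) (simp add: power4_eq_xxxx power2_eq_square)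
    finally show ?thesis .
  qed
  define P where "P = ((12) + (-12)*(-L) + (7)*(-L)^3 + (-4)*(-L)^4 + (1)*(-L)^6) + ((-24) + (-4)*(-L)^3)*u^2 + ((12) + (12)*(-L) + (-3)*(-L)^3)*u^4"
  have "0 \<le> u^4 * (((12) + (-12)*(-L) + (7)*(-L)^3 + (-4)*(-L)^4 + (1)*(-L)^6)*exp(4*(-L)) + ((-24) + (-4)*(-L)^3)*exp(2*(-L)) + ((12) + (12)*(-L) + (-3)*(-L)^3))"
    using hh u0 by simp
  also have "\<dots> = P" unfolding e2 e4 P_def using u0 by (simp add: field_simps) algebra
  finally have P0: "0 \<le> P" .
  define A where "A = 9 - 12*u^2 + 3*u^4 + 4 * L * (3 + L^2)"
  define B where "B = 6*L^3 - A"
  have id: "R_fun u - B^2 = 12 * P"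
    unfolding R_fun_def B_def A_def P_def L_def[symmetric] by algebra
  have "B^2 \<le> R_fun u" using id P0 by simp
  hence "sqrt (B^2) \<le> sqrt (R_fun u)" by (rule real_sqrt_le_mono)
  hence sB: "B \<le> sqrt (R_fun u)" by simp
  have X: "6*L^3 \<le> A + sqrt (R_fun u)" using sB unfolding B_def by simp
  have D: "1 / (8*L^3) \<le> 0" using L0 by (simp add: divide_nonpos_neg power_less_zero_eq)
  have "zeta1 u = (1/(8*L^3)) * (A + sqrt (R_fun u))" unfolding zeta1_def A_def L_def by simp
  also have "\<dots> \<le> (1/(8*L^3)) * (6*L^3)" by (rule mult_left_mono_neg[OF X D])
  also have "\<dots> = 3/4" using L0 by simp
  finally show ?thesis .
qed

theorem lemma4p9:
  shows "\<exists>\<alpha>::real. 0 < \<alpha> \<and> \<alpha> < 1 \<and>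
           (\<forall>u::real. 0 < u \<and> u < 1 \<longrightarrow>
              bdd_above ((\<lambda>j. zeta1 (u ^ j)) ` {1::nat..}) \<and> zeta_tilde u < \<alpha>)"
proof (intro exI[of _ "4/5"] conjI allI impI)
  fix u :: real
  assume u: "0 < u \<and> u < 1"
  have b: "zeta1 (u^j) \<le> 3/4" if "j \<in> {1::nat..}" for j
  proof (rule zeta1_le)
    show "0 < u^j" using u by simp
    show "u^j < 1" using u that by (simp add: power_less_one_iff)
  qed
  show "bdd_above ((\<lambda>j. zeta1 (u ^ j)) ` {1::nat..})"
    using b by (intro bdd_aboveI2) 
  have "zeta_tilde u \<le> 3/4" unfolding zeta_tilde_def
    by (rule cSUP_least) (use b in auto)
  thus "zeta_tilde u < 4/5" by simp
qed (auto)

end
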